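(* Let $\xi,\xi'\in\mathscr C$ with $D_i^\#(\xi)=\xi$ for every $i\in I$. Then $D_0^\#(\xi\xi')=\xi\,D_0^\#(\xi')$.
   Context: $G$ is a simply connected simple algebraic group over $\mathbb C$ with maximal torus $H$, Weyl group $W$, weight lattice $P$, simple roots $\alpha_i$ and simple reflections $s_i$ ($i\in I$), highest root $\vartheta$ with coroot $\vartheta^\vee$ and reflection $s_\vartheta$, coroot lattice $Q^\vee$ (on which $W$ acts). $\mathbb C(P)$ is the fraction field of the group algebra $\mathbb CP$ (basis $e^\lambda$), with $W$ acting by $w(e^\lambda)=e^{w\lambda}$. $\mathscr C=\mathbb C(P)\otimes\mathbb CQ^\vee$, with basis symbols $t_\beta$, is the commutative algebra with $(f\otimes t_\beta)(g\otimes t_\gamma)=fg\otimes t_{\beta+\gamma}$. The $\mathbb C$-linear operators $D_i^\#$ ($i\in I$) and $D_0^\#$ on $\mathscr C$ are $$D_i^\#(f\otimes t_\beta)=\frac{f}{1-e^{\alpha_i}}\otimes t_\beta-\frac{e^{\alpha_i}s_i(f)}{1-e^{\alpha_i}}\otimes t_{s_i\beta},$$ $$D_0^\#(f\otimes t_\beta)=\frac{f}{1-e^{-\vartheta}}\otimes t_\beta-\frac{e^{-\vartheta}s_\vartheta(f)}{1-e^{-\vartheta}}\otimes t_{s_\vartheta(\beta-\vartheta^\vee)}.$$ *)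

theory Defs
  imports Complex_Main "HOL-Library.Poly_Mapping" "HOL-Computational_Algebra.Fraction_Field"
begin

(* Root datum of a simply connected simple group, encoded by its Cartan matrix
   A :: 'i => 'i => int with  A i j = <alpha_i^vee, alpha_j>.
   The index set I is the finite type 'i (the linorder is only a technical device
   needed for the idom instance of the group algebra).
   Weight lattice P  = 'i =>0 int  (coordinates w.r.t. fundamental weights omega_j;
                                     P is the full weight lattice: simply connected)
   Coroot lattice Q^vee = 'i =>0 int (coordinates w.r.t. simple coroots alpha_j^vee). *)

type_synonym 'i lat = "'i \<Rightarrow>\<^sub>0 int"
type_synonym 'i grpalg = "'i lat \<Rightarrow>\<^sub>0 complex"
type_synonym 'i fracfield = "'i grpalg fract"
type_synonym 'i calC = "'i lat \<Rightarrow>\<^sub>0 'i fracfield"     (* C(P) (x) CQ^vee, t_beta basis *)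

definition pairing :: "'i::finite lat \<Rightarrow> 'i lat \<Rightarrow> int" where
  "pairing \<beta> lam = (\<Sum>j\<in>UNIV. Poly_Mapping.lookup \<beta> j * Poly_Mapping.lookup lam j)"

definition sroot :: "('i::finite \<Rightarrow> 'i \<Rightarrow> int) \<Rightarrow> 'i \<Rightarrow> 'i lat" where
  "sroot A i = (\<Sum>j\<in>UNIV. Poly_Mapping.single j (A j i))"

definition scoroot :: "'i \<Rightarrow> 'i lat" where
  "scoroot i = Poly_Mapping.single i 1"

definition reflP :: "'i::finite lat \<Rightarrow> 'i lat \<Rightarrow> 'i lat \<Rightarrow> 'i lat" where
  "reflP \<gamma> \<gamma>v lam = lam - frag_cmul (pairing \<gamma>v lam) \<gamma>"

definition reflQ :: "'i::finite lat \<Rightarrow> 'i lat \<Rightarrow> 'i lat \<Rightarrow> 'i lat" where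
  "reflQ \<gamma> \<gamma>v \<beta> = \<beta> - frag_cmul (pairing \<beta> \<gamma>) \<gamma>v"

definition siP :: "('i::finite \<Rightarrow> 'i \<Rightarrow> int) \<Rightarrow> 'i \<Rightarrow> 'i lat \<Rightarrow> 'i lat" where
  "siP A i = reflP (sroot A i) (scoroot i)"

definition siQ :: "('i::finite \<Rightarrow> 'i \<Rightarrow> int) \<Rightarrow> 'i \<Rightarrow> 'i lat \<Rightarrow> 'i lat" where
  "siQ A i = reflQ (sroot A i) (scoroot i)"

definition weylP :: "('i::finite \<Rightarrow> 'i \<Rightarrow> int) \<Rightarrow> 'i list \<Rightarrow> 'i lat \<Rightarrow> 'i lat" where
  "weylP A w = foldr (\<lambda>i f. siP A i \<circ> f) w id"

definition is_GCM :: "('i \<Rightarrow> 'i \<Rightarrow> int) \<Rightarrow> bool" where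
  "is_GCM A \<longleftrightarrow> (\<forall>i. A i i = 2) \<and> (\<forall>i j. i \<noteq> j \<longrightarrow> A i j \<le> 0)
      \<and> (\<forall>i j. A i j = 0 \<longleftrightarrow> A j i = 0)"

definition indecomposable :: "('i \<Rightarrow> 'i \<Rightarrow> int) \<Rightarrow> bool" where
  "indecomposable A \<longleftrightarrow> \<not> (\<exists>J. J \<noteq> {} \<and> J \<noteq> UNIV \<and> (\<forall>j\<in>J. \<forall>k\<in>-J. A j k = 0))"

(* Cartan matrix of a simple (irreducible, finite type) root system:
   indecomposable GCM with finite Weyl group (Kac, Prop. 4.9) *)
definition simple_cartan :: "('i::finite \<Rightarrow> 'i \<Rightarrow> int) \<Rightarrow> bool" where
  "simple_cartan A \<longleftrightarrow> is_GCM A \<and> indecomposable A \<and> finite (range (weylP A))"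

inductive_set rootpairs :: "('i::finite \<Rightarrow> 'i \<Rightarrow> int) \<Rightarrow> ('i lat \<times> 'i lat) set"
  for A where
  simple: "(sroot A i, scoroot i) \<in> rootpairs A"
| refl: "(\<gamma>, \<gamma>v) \<in> rootpairs A \<Longrightarrow> (siP A i \<gamma>, siQ A i \<gamma>v) \<in> rootpairs A"

definition in_Qplus :: "('i::finite \<Rightarrow> 'i \<Rightarrow> int) \<Rightarrow> 'i lat \<Rightarrow> bool" where
  "in_Qplus A \<mu> \<longleftrightarrow> (\<exists>c::'i \<Rightarrow> nat. \<mu> = (\<Sum>i\<in>UNIV. frag_cmul (int (c i)) (sroot A i)))"

definition highest_root :: "('i::finite \<Rightarrow> 'i \<Rightarrow> int) \<Rightarrow> 'i lat \<Rightarrow> 'i lat \<Rightarrow> bool" where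
  "highest_root A \<theta> \<theta>v \<longleftrightarrow> (\<theta>, \<theta>v) \<in> rootpairs A
      \<and> (\<forall>\<gamma> \<in> fst ` rootpairs A. in_Qplus A (\<theta> - \<gamma>))"

definition gact :: "('i lat \<Rightarrow> 'i lat) \<Rightarrow> 'i::linorder grpalg \<Rightarrow> 'i grpalg" where
  "gact \<sigma> f = (\<Sum>\<mu>\<in>Poly_Mapping.keys f. Poly_Mapping.single (\<sigma> \<mu>) (Poly_Mapping.lookup f \<mu>))"

definition fact :: "('i lat \<Rightarrow> 'i lat) \<Rightarrow> 'i::linorder fracfield \<Rightarrow> 'i fracfield" where
  "fact \<sigma> x = (SOME y. \<exists>a b. b \<noteq> 0 \<and> x = Fract a b \<and> y = Fract (gact \<sigma> a) (gact \<sigma> b))"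

definition ee :: "'i::linorder lat \<Rightarrow> 'i fracfield" where
  "ee lam = Fract (Poly_Mapping.single lam 1) 1"

definition Dop :: "'i::linorder fracfield \<Rightarrow> ('i lat \<Rightarrow> 'i lat) \<Rightarrow> ('i lat \<Rightarrow> 'i lat)
                   \<Rightarrow> 'i calC \<Rightarrow> 'i calC" where
  "Dop e \<sigma> \<tau> \<xi> = (\<Sum>\<beta>\<in>Poly_Mapping.keys \<xi>.
      Poly_Mapping.single \<beta> (Poly_Mapping.lookup \<xi> \<beta> / (1 - e))
    - Poly_Mapping.single (\<tau> \<beta>) (e * fact \<sigma> (Poly_Mapping.lookup \<xi> \<beta>) / (1 - e)))"

definition Dsharp :: "('i::{finite,linorder} \<Rightarrow> 'i \<Rightarrow> int) \<Rightarrow> 'i \<Rightarrow> 'i calC \<Rightarrow> 'i calC" where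
  "Dsharp A i = Dop (ee (sroot A i)) (siP A i) (siQ A i)"

definition Dsharp0 :: "'i::{finite,linorder} lat \<Rightarrow> 'i lat \<Rightarrow> 'i calC \<Rightarrow> 'i calC" where
  "Dsharp0 \<theta> \<theta>v = Dop (ee (- \<theta>)) (reflP \<theta> \<theta>v) (\<lambda>\<beta>. reflQ \<theta> \<theta>v (\<beta> - \<theta>v))"

end

theory Submission
  imports Defs
begin

lemma pm_expand:
  fixes p :: "'a \<Rightarrow>\<^sub>0 'b::comm_monoid_add"
  shows "p = (\<Sum>k\<in>Poly_Mapping.keys p. Poly_Mapping.single k (Poly_Mapping.lookup p k))"
proof (rule poly_mapping_eqI)
  fix j
  show "Poly_Mapping.lookup p j = Poly_Mapping.lookup (\<Sum>k\<in>Poly_Mapping.keys p. Poly_Mapping.single k (Poly_Mapping.lookup p k)) j"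
    by (simp add: lookup_sum lookup_single when_def in_keys_iff)
qed

definition gen :: "('b::zero \<Rightarrow> 'c::comm_monoid_add) \<Rightarrow> ('a \<Rightarrow> 'd) \<Rightarrow> ('a \<Rightarrow>\<^sub>0 'b) \<Rightarrow> ('d \<Rightarrow>\<^sub>0 'c)" where
  "gen \<phi> \<tau> f = (\<Sum>\<mu>\<in>Poly_Mapping.keys f. Poly_Mapping.single (\<tau> \<mu>) (\<phi> (Poly_Mapping.lookup f \<mu>)))"

lemma gen_superset:
  assumes "finite S" "Poly_Mapping.keys f \<subseteq> S" "\<phi> 0 = 0"
  shows "gen \<phi> \<tau> f = (\<Sum>\<mu>\<in>S. Poly_Mapping.single (\<tau> \<mu>) (\<phi> (Poly_Mapping.lookup f \<mu>)))"
  unfolding gen_def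
  by (rule sum.mono_neutral_left) (use assms in \<open>auto simp: in_keys_iff\<close>)

lemma gen_zero [simp]: "gen \<phi> \<tau> 0 = 0"
  by (simp add: gen_def)

lemma gen_single:
  assumes "\<phi> 0 = 0"
  shows "gen \<phi> \<tau> (Poly_Mapping.single \<mu> c) = Poly_Mapping.single (\<tau> \<mu>) (\<phi> c)"
  using assms by (cases "c = 0") (simp_all add: gen_def)

lemma gen_add:
  fixes \<phi> :: "'b::comm_monoid_add \<Rightarrow> 'c::comm_monoid_add"
  assumes add: "\<And>x y. \<phi> (x + y) = \<phi> x + \<phi> y" and z: "\<phi> 0 = 0"
  shows "gen \<phi> \<tau> (f + g) = gen \<phi> \<tau> f + gen \<phi> \<tau> g"
proof -
  let ?S = "Poly_Mapping.keys f \<union> Poly_Mapping.keys g"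
  have "gen \<phi> \<tau> (f + g) = (\<Sum>\<mu>\<in>?S. Poly_Mapping.single (\<tau> \<mu>) (\<phi> (Poly_Mapping.lookup (f+g) \<mu>)))"
    by (rule gen_superset) (auto simp: z keys_add)
  also have "\<dots> = (\<Sum>\<mu>\<in>?S. Poly_Mapping.single (\<tau> \<mu>) (\<phi> (Poly_Mapping.lookup f \<mu>)))
     + (\<Sum>\<mu>\<in>?S. Poly_Mapping.single (\<tau> \<mu>) (\<phi> (Poly_Mapping.lookup g \<mu>)))"
    by (simp add: lookup_add add single_add sum.distrib)
  also have "\<dots> = gen \<phi> \<tau> f + gen \<phi> \<tau> g"
    by (subst (1 2) gen_superset[of ?S]) (auto simp: z)
  finally show ?thesis .
qed

lemma gen_sum:
  fixes \<phi> :: "'b::comm_monoid_add \<Rightarrow> 'c::comm_monoid_add"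
  assumes add: "\<And>x y. \<phi> (x + y) = \<phi> x + \<phi> y" and z: "\<phi> 0 = 0"
  shows "gen \<phi> \<tau> (\<Sum>i\<in>A. h i) = (\<Sum>i\<in>A. gen \<phi> \<tau> (h i))"
  by (induction A rule: infinite_finite_induct) (simp_all add: gen_add[OF add z])

lemma gen_mult:
  fixes \<phi> :: "'b::comm_ring_1 \<Rightarrow> 'c::comm_ring_1" and \<tau> \<tau>1 :: "'a::comm_monoid_add \<Rightarrow> 'd::comm_monoid_add"
  assumes add: "\<And>x y. \<phi> (x + y) = \<phi> x + \<phi> y" and z: "\<phi> 0 = 0"
    and mul: "\<And>x y. \<phi> (x * y) = \<phi> x * \<phi> y"
    and tau: "\<And>a b. \<tau> (a + b) = \<tau>1 a + \<tau> b"
  shows "gen \<phi> \<tau> (f * g) = gen \<phi> \<tau>1 f * gen \<phi> \<tau> g"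
proof -
  have "f * g = (\<Sum>a\<in>Poly_Mapping.keys f. \<Sum>b\<in>Poly_Mapping.keys g.
      Poly_Mapping.single (a + b) (Poly_Mapping.lookup f a * Poly_Mapping.lookup g b))"
    by (subst (1 2) pm_expand) (simp add: sum_product mult_single)
  then have "gen \<phi> \<tau> (f * g) = (\<Sum>a\<in>Poly_Mapping.keys f. \<Sum>b\<in>Poly_Mapping.keys g.
      Poly_Mapping.single (\<tau>1 a + \<tau> b) (\<phi> (Poly_Mapping.lookup f a) * \<phi> (Poly_Mapping.lookup g b)))"
    by (simp add: gen_sum[OF add z] gen_single[where \<phi>=\<phi>, OF z] tau mul)
  also have "\<dots> = gen \<phi> \<tau>1 f * gen \<phi> \<tau> g"
    by (simp add: gen_def sum_product mult_single)
  finally show ?thesis .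
qed

lemma gen_comp:
  fixes \<phi>1 :: "'b::comm_monoid_add \<Rightarrow> 'c::comm_monoid_add" and \<phi>2 :: "'e::zero \<Rightarrow> 'b"
  assumes add: "\<And>x y. \<phi>1 (x + y) = \<phi>1 x + \<phi>1 y" and z1: "\<phi>1 0 = 0" and z2: "\<phi>2 0 = 0"
  shows "gen \<phi>1 \<tau>1 (gen \<phi>2 \<tau>2 f) = gen (\<phi>1 \<circ> \<phi>2) (\<tau>1 \<circ> \<tau>2) f"
proof -
  have "gen \<phi>1 \<tau>1 (gen \<phi>2 \<tau>2 f) = (\<Sum>\<mu>\<in>Poly_Mapping.keys f. gen \<phi>1 \<tau>1 (Poly_Mapping.single (\<tau>2 \<mu>) (\<phi>2 (Poly_Mapping.lookup f \<mu>))))"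
    unfolding gen_def[of \<phi>2] by (rule gen_sum[OF add z1])
  also have "\<dots> = gen (\<phi>1 \<circ> \<phi>2) (\<tau>1 \<circ> \<tau>2) f"
    unfolding gen_single[where \<phi>=\<phi>1, OF z1] by (simp add: gen_def)
  finally show ?thesis .
qed

lemma gen_id: "gen id id (f :: 'a \<Rightarrow>\<^sub>0 'b::comm_monoid_add) = f"
  by (simp add: gen_def flip: pm_expand)


lemma lookup_reflP: "Poly_Mapping.lookup (reflP \<gamma> \<gamma>v lam) j = Poly_Mapping.lookup lam j - pairing \<gamma>v lam * Poly_Mapping.lookup \<gamma> j"
  by (simp add: reflP_def lookup_minus)

lemma lookup_reflQ: "Poly_Mapping.lookup (reflQ \<gamma> \<gamma>v \<beta>) j = Poly_Mapping.lookup \<beta> j - pairing \<beta> \<gamma> * Poly_Mapping.lookup \<gamma>v j"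
  by (simp add: reflQ_def lookup_minus)

lemma pairing_reflP_right:
  "pairing \<beta> (reflP \<gamma> \<gamma>v lam) = pairing \<beta> lam - pairing \<gamma>v lam * pairing \<beta> \<gamma>"
  by (simp add: pairing_def lookup_reflP algebra_simps sum_subtractf sum_distrib_left) (rule sum.swap)

lemma pairing_reflQ_left:
  "pairing (reflQ \<gamma> \<gamma>v \<beta>) lam = pairing \<beta> lam - pairing \<beta> \<gamma> * pairing \<gamma>v lam"
  by (simp add: pairing_def lookup_reflQ algebra_simps sum_subtractf sum_distrib_left)

lemma pairing_add_left: "pairing (a + b) lam = pairing a lam + pairing b lam"
  by (simp add: pairing_def lookup_add algebra_simps sum.distrib)

lemma pairing_add_right: "pairing \<beta> (a + b) = pairing \<beta> a + pairing \<beta> b"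
  by (simp add: pairing_def lookup_add algebra_simps sum.distrib)

lemma pairing_zero_right [simp]: "pairing \<beta> 0 = 0"
  by (simp add: pairing_def)

lemma pairing_zero_left [simp]: "pairing 0 lam = 0"
  by (simp add: pairing_def)

lemma reflP_add: "reflP \<gamma> \<gamma>v (a + b) = reflP \<gamma> \<gamma>v a + reflP \<gamma> \<gamma>v b"
  by (rule poly_mapping_eqI) (simp add: lookup_reflP lookup_add pairing_add_right algebra_simps)

lemma reflQ_add: "reflQ \<gamma> \<gamma>v (a + b) = reflQ \<gamma> \<gamma>v a + reflQ \<gamma> \<gamma>v b"
  by (rule poly_mapping_eqI) (simp add: lookup_reflQ lookup_add pairing_add_left algebra_simps)

lemma reflP_invol:
  assumes "pairing \<gamma>v \<gamma> = 2"
  shows "reflP \<gamma> \<gamma>v (reflP \<gamma> \<gamma>v lam) = lam"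
  by (rule poly_mapping_eqI) (simp add: lookup_reflP pairing_reflP_right assms algebra_simps)

lemma reflQ_invol:
  assumes "pairing \<gamma>v \<gamma> = 2"
  shows "reflQ \<gamma> \<gamma>v (reflQ \<gamma> \<gamma>v b) = b"
  by (rule poly_mapping_eqI) (simp add: lookup_reflQ pairing_reflQ_left assms algebra_simps)

lemma pairing_invariant:
  assumes "pairing \<gamma>v \<gamma> = 2"
  shows "pairing (reflQ \<gamma> \<gamma>v b) (reflP \<gamma> \<gamma>v lam) = pairing b lam"
  by (simp add: pairing_reflP_right pairing_reflQ_left assms algebra_simps)

lemma reflP_conj:
  assumes "pairing av a = 2"
  shows "reflP (reflP a av \<gamma>) (reflQ a av \<gamma>v) lam = reflP a av (reflP \<gamma> \<gamma>v (reflP a av lam))"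
  by (rule poly_mapping_eqI) (simp add: lookup_reflP pairing_reflP_right pairing_reflQ_left assms algebra_simps)

lemma reflQ_conj:
  assumes "pairing av a = 2"
  shows "reflQ (reflP a av \<gamma>) (reflQ a av \<gamma>v) b = reflQ a av (reflQ \<gamma> \<gamma>v (reflQ a av b))"
  by (rule poly_mapping_eqI) (simp add: lookup_reflQ pairing_reflP_right pairing_reflQ_left assms algebra_simps)

lemma pairing_simple: "pairing (scoroot i) (sroot A i) = A i i"
proof -
  have "pairing (scoroot i) (sroot A i) = (\<Sum>j\<in>UNIV. (if i = j then A i i else 0))"
    unfolding pairing_def scoroot_def sroot_def
    by (rule sum.cong) (auto simp: lookup_single lookup_sum when_def)
  then show ?thesis by simp
qed


lemma gact_gen: "gact \<sigma> = gen id \<sigma>"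
  by (rule ext) (simp add: gact_def gen_def)

lemma gact_add: "gact \<sigma> (f + g) = gact \<sigma> f + gact \<sigma> g"
  unfolding gact_gen by (rule gen_add) auto

lemma gact_mult:
  assumes "\<And>a b. \<sigma> (a + b) = \<sigma> a + \<sigma> b"
  shows "gact \<sigma> (f * g) = gact \<sigma> f * gact \<sigma> g"
  unfolding gact_gen by (rule gen_mult) (auto simp: assms)

lemma gact_linv:
  assumes "\<And>x. \<rho> (\<sigma> x) = x"
  shows "gact \<rho> (gact \<sigma> f) = f"
proof -
  have "gact \<rho> (gact \<sigma> f) = gen (id \<circ> id) (\<rho> \<circ> \<sigma>) f"
    unfolding gact_gen by (rule gen_comp) auto
  also have "\<rho> \<circ> \<sigma> = id" using assms by (auto simp: fun_eq_iff)
  finally show ?thesis by (simp only: comp_id gen_id)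
qed

lemma gact_comp: "gact \<sigma>1 (gact \<sigma>2 f) = gact (\<sigma>1 \<circ> \<sigma>2) f"
  unfolding gact_gen by (subst gen_comp) auto

lemma gact_nonzero:
  assumes "\<And>x. \<rho> (\<sigma> x) = x" "b \<noteq> 0"
  shows "gact \<sigma> b \<noteq> 0"
proof
  assume "gact \<sigma> b = 0"
  then have "gact \<rho> (gact \<sigma> b) = 0" by (simp add: gact_gen)
  then show False using gact_linv[of \<rho> \<sigma> b] assms by simp
qed

definition good :: "('i lat \<Rightarrow> 'i lat) \<Rightarrow> bool" where
  "good \<sigma> \<longleftrightarrow> (\<forall>a b. \<sigma> (a + b) = \<sigma> a + \<sigma> b) \<and> (\<exists>\<rho>. \<forall>x. \<rho> (\<sigma> x) = x)"

lemma fact_Fract: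
  fixes a b :: "'i::linorder grpalg"
  assumes g: "good \<sigma>" and b: "b \<noteq> 0"
  shows "fact \<sigma> (Fract a b) = Fract (gact \<sigma> a) (gact \<sigma> b)"
proof -
  from g obtain \<rho> where r: "\<And>x. \<rho> (\<sigma> x) = x" and ad: "\<And>a b. \<sigma> (a + b) = \<sigma> a + \<sigma> b"
    unfolding good_def by blast
  show ?thesis
    unfolding fact_def
  proof (rule someI2)
    show "\<exists>a' b'. b' \<noteq> 0 \<and> Fract a b = Fract a' b' \<and> Fract (gact \<sigma> a) (gact \<sigma> b) = Fract (gact \<sigma> a') (gact \<sigma> b')"
      using b by blast
  next
    fix y assume "\<exists>a' b'. b' \<noteq> 0 \<and> Fract a b = Fract a' b' \<and> y = Fract (gact \<sigma> a') (gact \<sigma> b')"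
    then obtain a' b' where b': "b' \<noteq> 0" and e: "Fract a b = Fract a' b'" and y: "y = Fract (gact \<sigma> a') (gact \<sigma> b')"
      by blast
    from e b b' have "a * b' = a' * b" by (simp add: eq_fract)
    then have "gact \<sigma> a * gact \<sigma> b' = gact \<sigma> a' * gact \<sigma> b"
      by (metis gact_mult ad)
    then show "y = Fract (gact \<sigma> a) (gact \<sigma> b)"
      using y gact_nonzero[of \<rho> \<sigma>, OF r b] gact_nonzero[of \<rho> \<sigma>, OF r b'] by (simp add: eq_fract)
  qed
qed

lemma fact_zero: "good \<sigma> \<Longrightarrow> fact \<sigma> 0 = 0"
  by (simp add: Zero_fract_def fact_Fract gact_def eq_fract)

lemma fact_add:
  assumes g: "good \<sigma>"
  shows "fact \<sigma> (x + y) = fact \<sigma> x + fact \<sigma> y"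
proof -
  from g obtain \<rho> where r: "\<And>x. \<rho> (\<sigma> x) = x" and ad: "\<And>a b. \<sigma> (a + b) = \<sigma> a + \<sigma> b"
    unfolding good_def by blast
  show ?thesis
  proof (cases x)
    case (Fract a b)
    show ?thesis
    proof (cases y)
      case (Fract c d)
      with \<open>x = Fract a b\<close> \<open>b \<noteq> 0\<close> show ?thesis
        using gact_nonzero[of \<rho> \<sigma>, OF r] by (simp add: fact_Fract[OF g] gact_add gact_mult[OF ad])
    qed
  qed
qed

lemma fact_mult:
  assumes g: "good \<sigma>"
  shows "fact \<sigma> (x * y) = fact \<sigma> x * fact \<sigma> y"
proof -
  from g obtain \<rho> where r: "\<And>x. \<rho> (\<sigma> x) = x" and ad: "\<And>a b. \<sigma> (a + b) = \<sigma> a + \<sigma> b"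
    unfolding good_def by blast
  show ?thesis
  proof (cases x)
    case (Fract a b)
    show ?thesis
    proof (cases y)
      case (Fract c d)
      with \<open>x = Fract a b\<close> \<open>b \<noteq> 0\<close> show ?thesis
        using gact_nonzero[of \<rho> \<sigma>, OF r] by (simp add: fact_Fract[OF g] gact_mult[OF ad])
    qed
  qed
qed

lemma good_comp:
  assumes "good \<sigma>1" "good \<sigma>2"
  shows "good (\<sigma>1 \<circ> \<sigma>2)"
proof -
  from assms obtain \<rho>1 \<rho>2 where "\<And>x. \<rho>1 (\<sigma>1 x) = x" "\<And>x. \<rho>2 (\<sigma>2 x) = x"
    unfolding good_def by blast
  then have "\<forall>x. (\<rho>2 \<circ> \<rho>1) ((\<sigma>1 \<circ> \<sigma>2) x) = x" by simp
  then show ?thesis using assms unfolding good_def by (metis comp_apply)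
qed

lemma fact_comp:
  assumes g1: "good \<sigma>1" and g2: "good \<sigma>2"
  shows "fact \<sigma>1 (fact \<sigma>2 x) = fact (\<sigma>1 \<circ> \<sigma>2) x"
proof -
  from g2 obtain \<rho> where r: "\<And>x. \<rho> (\<sigma>2 x) = x"
    unfolding good_def by blast
  show ?thesis
  proof (cases x)
    case (Fract a b)
    then show ?thesis
      using gact_nonzero[of \<rho> \<sigma>2, OF r] by (simp add: fact_Fract[OF g2] fact_Fract[OF g1] fact_Fract[OF good_comp[OF g1 g2]] gact_comp)
  qed
qed


lemma good_refl:
  assumes "pairing av a = 2"
  shows "good (reflP a av)"
  unfolding good_def using reflP_add reflP_invol[OF assms] by blast

lemma act_comp:
  assumes "good \<sigma>1" "good \<sigma>2"
  shows "gen (fact \<sigma>1) \<tau>1 (gen (fact \<sigma>2) \<tau>2 \<xi>) = gen (fact (\<sigma>1 \<circ> \<sigma>2)) (\<tau>1 \<circ> \<tau>2) (\<xi> :: 'i::linorder calC)"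
proof -
  have "gen (fact \<sigma>1) \<tau>1 (gen (fact \<sigma>2) \<tau>2 \<xi>) = gen (fact \<sigma>1 \<circ> fact \<sigma>2) (\<tau>1 \<circ> \<tau>2) \<xi>"
    by (rule gen_comp) (auto simp: fact_add fact_zero assms)
  also have "fact \<sigma>1 \<circ> fact \<sigma>2 = fact (\<sigma>1 \<circ> \<sigma>2)"
    by (rule ext) (simp add: fact_comp assms)
  finally show ?thesis .
qed

lemma scal_expand:
  fixes \<xi> :: "'a::comm_monoid_add \<Rightarrow>\<^sub>0 'b::comm_ring_1"
  shows "Poly_Mapping.single 0 c * \<xi> = (\<Sum>\<beta>\<in>Poly_Mapping.keys \<xi>. Poly_Mapping.single \<beta> (c * Poly_Mapping.lookup \<xi> \<beta>))"
  by (subst (1) pm_expand) (simp add: sum_distrib_left mult_single)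

lemma scal_gen:
  fixes \<xi> :: "'a \<Rightarrow>\<^sub>0 'e::zero" and \<phi> :: "'e \<Rightarrow> 'b::comm_ring_1" and \<tau> :: "'a \<Rightarrow> 'd::comm_monoid_add"
  shows "Poly_Mapping.single 0 c * gen \<phi> \<tau> \<xi> = (\<Sum>\<beta>\<in>Poly_Mapping.keys \<xi>. Poly_Mapping.single (\<tau> \<beta>) (c * \<phi> (Poly_Mapping.lookup \<xi> \<beta>)))"
  by (simp add: gen_def sum_distrib_left mult_single)

lemma Dop_expr:
  "Dop e \<sigma> \<tau> \<xi> = Poly_Mapping.single 0 (1 / (1 - e)) * \<xi> - Poly_Mapping.single 0 (e / (1 - e)) * gen (fact \<sigma>) \<tau> \<xi>"
  unfolding Dop_def scal_gen
  by (simp add: scal_expand sum_subtractf)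

lemma Dop_fixed:
  fixes \<xi> :: "'i::linorder calC"
  assumes "Dop e \<sigma> \<tau> \<xi> = \<xi>" and e0: "e \<noteq> 0"
  shows "gen (fact \<sigma>) \<tau> \<xi> = \<xi>"
proof (cases "e = 1")
  case True
  with assms have "\<xi> = 0" by (simp add: Dop_expr)
  then show ?thesis by simp
next
  case False
  let ?c = "1 / (1 - e)" and ?d = "e / (1 - e)" and ?X = "gen (fact \<sigma>) \<tau> \<xi>"
  have cd: "?c - 1 = ?d" using False by (simp add: field_simps)
  have d0: "?d \<noteq> 0" using False e0 by simp
  have "Poly_Mapping.single 0 ?c * \<xi> - Poly_Mapping.single 0 1 * \<xi> = Poly_Mapping.single 0 ?d * ?X"
    using assms(1) by (simp add: Dop_expr algebra_simps)
  then have "Poly_Mapping.single 0 ?d * \<xi> = Poly_Mapping.single 0 ?d * ?X"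
    by (simp add: cd[symmetric] single_diff left_diff_distrib)
  then have "Poly_Mapping.single 0 (1 / ?d) * (Poly_Mapping.single 0 ?d * \<xi>) = Poly_Mapping.single 0 (1 / ?d) * (Poly_Mapping.single 0 ?d * ?X)"
    by simp
  then show ?thesis using d0 by (simp only: mult.assoc[symmetric] mult_single) simp
qed

lemma rootpairs_fixed:
  fixes \<xi> :: "'i::{finite,linorder} calC"
  assumes "(\<gamma>, \<gamma>v) \<in> rootpairs A" and A2: "\<And>i. A i i = 2"
    and fix_i: "\<And>i. gen (fact (siP A i)) (siQ A i) \<xi> = \<xi>"
  shows "pairing \<gamma>v \<gamma> = 2 \<and> gen (fact (reflP \<gamma> \<gamma>v)) (reflQ \<gamma> \<gamma>v) \<xi> = \<xi>"
  using assms(1)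
proof (induction rule: rootpairs.induct)
  case (simple i)
  then show ?case using fix_i[of i] pairing_simple[of i A] A2[of i]
    by (simp add: siP_def siQ_def)
next
  case (refl \<gamma> \<gamma>v i)
  let ?a = "sroot A i" and ?av = "scoroot i"
  have p2: "pairing ?av ?a = 2" using pairing_simple[of i A] A2[of i] by simp
  have ih: "pairing \<gamma>v \<gamma> = 2" "gen (fact (reflP \<gamma> \<gamma>v)) (reflQ \<gamma> \<gamma>v) \<xi> = \<xi>"
    using refl.IH by auto
  have si: "gen (fact (reflP ?a ?av)) (reflQ ?a ?av) \<xi> = \<xi>"
    using fix_i[of i] by (simp add: siP_def siQ_def)
  have P: "reflP (reflP ?a ?av \<gamma>) (reflQ ?a ?av \<gamma>v) = reflP ?a ?av \<circ> (reflP \<gamma> \<gamma>v \<circ> reflP ?a ?av)"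
    by (rule ext) (simp add: reflP_conj[OF p2])
  have Q: "reflQ (reflP ?a ?av \<gamma>) (reflQ ?a ?av \<gamma>v) = reflQ ?a ?av \<circ> (reflQ \<gamma> \<gamma>v \<circ> reflQ ?a ?av)"
    by (rule ext) (simp add: reflQ_conj[OF p2])
  have gs: "good (reflP ?a ?av)" by (rule good_refl[OF p2])
  have gr: "good (reflP \<gamma> \<gamma>v)" by (rule good_refl[OF ih(1)])
  have "gen (fact (reflP (reflP ?a ?av \<gamma>) (reflQ ?a ?av \<gamma>v))) (reflQ (reflP ?a ?av \<gamma>) (reflQ ?a ?av \<gamma>v)) \<xi>
      = gen (fact (reflP ?a ?av)) (reflQ ?a ?av) (gen (fact (reflP \<gamma> \<gamma>v)) (reflQ \<gamma> \<gamma>v) (gen (fact (reflP ?a ?av)) (reflQ ?a ?av) \<xi>))"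
    unfolding P Q by (simp add: act_comp gs gr good_comp)
  also have "\<dots> = \<xi>" by (simp add: si ih(2))
  finally show ?case
    using pairing_invariant[OF p2, of \<gamma>v \<gamma>] ih(1) by (simp add: siP_def siQ_def)
qed

theorem lemma2p6:
  fixes A :: "'i::{finite,linorder} \<Rightarrow> 'i \<Rightarrow> int"
    and \<theta> \<theta>v :: "'i lat"
    and \<xi> \<xi>' :: "'i calC"
  assumes "simple_cartan A"
    and "highest_root A \<theta> \<theta>v"
    and "\<forall>i. Dsharp A i \<xi> = \<xi>"
  shows "Dsharp0 \<theta> \<theta>v (\<xi> * \<xi>') = \<xi> * Dsharp0 \<theta> \<theta>v \<xi>'"
proof -
  have A2: "\<And>i. A i i = 2" using assms(1) by (simp add: simple_cartan_def is_GCM_def)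
  have ee0: "ee lam \<noteq> 0" for lam :: "'i lat"
  proof -
    have "Poly_Mapping.single lam (1::complex) \<noteq> 0"
      by (metis lookup_single_eq lookup_zero one_neq_zero)
    then show ?thesis by (simp add: ee_def Zero_fract_def eq_fract)
  qed
  have fix_i: "\<And>i. gen (fact (siP A i)) (siQ A i) \<xi> = \<xi>"
    using assms(3) Dop_fixed ee0 unfolding Dsharp_def by blast
  have rp: "(\<theta>, \<theta>v) \<in> rootpairs A" using assms(2) by (simp add: highest_root_def)
  from rootpairs_fixed[OF rp A2 fix_i]
  have p2: "pairing \<theta>v \<theta> = 2" and fx: "gen (fact (reflP \<theta> \<theta>v)) (reflQ \<theta> \<theta>v) \<xi> = \<xi>"
    by auto
  have g: "good (reflP \<theta> \<theta>v)" by (rule good_refl[OF p2])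
  let ?\<tau> = "\<lambda>\<beta>. reflQ \<theta> \<theta>v (\<beta> - \<theta>v)"
  have tau: "?\<tau> (a + b) = reflQ \<theta> \<theta>v a + ?\<tau> b" for a b
    using reflQ_add[of \<theta> \<theta>v a "b - \<theta>v"] by (simp add: add_diff_eq)
  have "gen (fact (reflP \<theta> \<theta>v)) ?\<tau> (\<xi> * \<xi>') = gen (fact (reflP \<theta> \<theta>v)) (reflQ \<theta> \<theta>v) \<xi> * gen (fact (reflP \<theta> \<theta>v)) ?\<tau> \<xi>'"
    by (rule gen_mult) (auto simp: fact_add fact_zero fact_mult g tau)
  then have m: "gen (fact (reflP \<theta> \<theta>v)) ?\<tau> (\<xi> * \<xi>') = \<xi> * gen (fact (reflP \<theta> \<theta>v)) ?\<tau> \<xi>'"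
    using fx by simp
  show ?thesis
    unfolding Dsharp0_def Dop_expr m by (simp add: algebra_simps)
qed

end
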